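(* Let $v$ be a vertex of a finite 2-covered graph of spaces $X$ with incident oriented edges $e_i$, $i\in I$ (so $\tau(e_i)=v$), $|I|\ge1$, with edge maps $\tau_i\colon E_i\looparrowright V$. Suppose $v$ is unfoldable, $v$ is not reducible, and if $|I|=1$ then $V$ has at least one edge. Then exactly one of the following holds: (1) (degenerate) there is a distinguished index $0\in I$ such that $\tau_0\colon E_0\to V$ is not an embedding, and for $i\ne0$ the maps $\tau_i$ are embeddings with pairwise disjoint images; (2) (nondegenerate) $|I|=3$, all $\tau_i$ are embeddings, the images of any two incident edge spaces intersect, and there is a vertex of $V$ lying in the image of all three incident edge spaces.
   Context: A 2-covered graph of spaces $X$ consists of: a finite connected graph $\Gamma_U(X)$, with oriented edges $e$, reversal $\bar e$, and terminal/initial vertices $\tau(e),\iota(e)=\tau(\bar e)$; for each vertex $v$ a finite connected graph $V$; for each edge $e$ a finite connected graph $E=\bar E$ (possibly a point); and for each oriented edge $e$ a combinatorial immersion $\tau_e\colon E\looparrowright V$ where $v=\tau(e)$; such that for each vertex $v$, every edge of $V$ is the image of exactly two edges of $\bigsqcup_{\tau(e)=v}E$. For a vertex $v$ with incident oriented edges $e_i$, $i\in I$, and $J\subseteq I$, put $V_J=\bigcup_{j\in J}\tau_j(E_j)$. The vertex $v$ is unfoldable if for every $J\subseteq I$, either the map $\bigsqcup_{j\in J}E_j\to V_J$ is an isomorphism of graphs or the map $\bigsqcup_{i\in I\setminus J}E_i\to V_{I\setminus J}$ is an isomorphism of graphs. The vertex $v$ is reducible if it has exactly two incident oriented edges and both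 maps $E_i\to V$ are graph isomorphisms. *)

theory Defs
  imports Main
begin

text \<open>Combinatorial graphs in Serre's sense: a vertex set, a set of oriented
edges (darts), a fixed-point-free involution (edge reversal) and a terminal
vertex map.  Loops and multiple edges are allowed.\<close>

record ('v, 'd) sgraph =
  gverts :: "'v set"
  gdarts :: "'d set"
  grev   :: "'d \<Rightarrow> 'd"
  gterm  :: "'d \<Rightarrow> 'v"

definition ginit :: "('v, 'd) sgraph \<Rightarrow> 'd \<Rightarrow> 'v" where
  "ginit G d = gterm G (grev G d)"

definition wf_graph :: "('v, 'd) sgraph \<Rightarrow> bool" where
  "wf_graph G \<longleftrightarrow>
     (\<forall>d\<in>gdarts G. grev G d \<in> gdarts G \<and> grev G d \<noteq> d \<and>
                   grev G (grev G d) = d \<and> gterm G d \<in> gverts G)"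

definition finite_graph :: "('v, 'd) sgraph \<Rightarrow> bool" where
  "finite_graph G \<longleftrightarrow> wf_graph G \<and> finite (gverts G) \<and> finite (gdarts G)"

definition connected_graph :: "('v, 'd) sgraph \<Rightarrow> bool" where
  "connected_graph G \<longleftrightarrow> gverts G \<noteq> {} \<and>
     (\<forall>u\<in>gverts G. \<forall>w\<in>gverts G.
        (u, w) \<in> {(ginit G d, gterm G d) | d. d \<in> gdarts G}\<^sup>*)"

definition graph_morph ::
  "('v, 'd) sgraph \<Rightarrow> ('w, 'e) sgraph \<Rightarrow> ('v \<Rightarrow> 'w) \<Rightarrow> ('d \<Rightarrow> 'e) \<Rightarrow> bool" where
  "graph_morph G H fv fd \<longleftrightarrow>
     fv ` gverts G \<subseteq> gverts H \<and> fd ` gdarts G \<subseteq> gdarts H \<and>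
     (\<forall>d\<in>gdarts G. fd (grev G d) = grev H (fd d) \<and> fv (gterm G d) = gterm H (fd d))"

definition immersion ::
  "('v, 'd) sgraph \<Rightarrow> ('w, 'e) sgraph \<Rightarrow> ('v \<Rightarrow> 'w) \<Rightarrow> ('d \<Rightarrow> 'e) \<Rightarrow> bool" where
  "immersion G H fv fd \<longleftrightarrow> graph_morph G H fv fd \<and>
     (\<forall>d1\<in>gdarts G. \<forall>d2\<in>gdarts G.
        gterm G d1 = gterm G d2 \<and> fd d1 = fd d2 \<longrightarrow> d1 = d2)"

definition embedding ::
  "('v, 'd) sgraph \<Rightarrow> ('w, 'e) sgraph \<Rightarrow> ('v \<Rightarrow> 'w) \<Rightarrow> ('d \<Rightarrow> 'e) \<Rightarrow> bool" where
  "embedding G H fv fd \<longleftrightarrow> graph_morph G H fv fd \<and>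
     inj_on fv (gverts G) \<and> inj_on fd (gdarts G)"

definition graph_iso ::
  "('v, 'd) sgraph \<Rightarrow> ('w, 'e) sgraph \<Rightarrow> ('v \<Rightarrow> 'w) \<Rightarrow> ('d \<Rightarrow> 'e) \<Rightarrow> bool" where
  "graph_iso G H fv fd \<longleftrightarrow> embedding G H fv fd \<and>
     fv ` gverts G = gverts H \<and> fd ` gdarts G = gdarts H"

definition disj_union :: "'i set \<Rightarrow> ('i \<Rightarrow> ('v, 'd) sgraph) \<Rightarrow> ('i \<times> 'v, 'i \<times> 'd) sgraph" where
  "disj_union J E =
     \<lparr> gverts = (SIGMA j:J. gverts (E j)),
       gdarts = (SIGMA j:J. gdarts (E j)),
       grev = (\<lambda>(j, d). (j, grev (E j) d)),
       gterm = (\<lambda>(j, d). (j, gterm (E j) d)) \<rparr>"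

definition image_union ::
  "'i set \<Rightarrow> ('i \<Rightarrow> ('v, 'd) sgraph) \<Rightarrow> ('w, 'e) sgraph \<Rightarrow>
   ('i \<Rightarrow> 'v \<Rightarrow> 'w) \<Rightarrow> ('i \<Rightarrow> 'd \<Rightarrow> 'e) \<Rightarrow> ('w, 'e) sgraph" where
  "image_union J E V fv fd =
     \<lparr> gverts = (\<Union>j\<in>J. fv j ` gverts (E j)),
       gdarts = (\<Union>j\<in>J. fd j ` gdarts (E j)),
       grev = grev V,
       gterm = gterm V \<rparr>"

definition union_map_iso ::
  "'i set \<Rightarrow> ('i \<Rightarrow> ('v, 'd) sgraph) \<Rightarrow> ('w, 'e) sgraph \<Rightarrow>
   ('i \<Rightarrow> 'v \<Rightarrow> 'w) \<Rightarrow> ('i \<Rightarrow> 'd \<Rightarrow> 'e) \<Rightarrow> bool" where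
  "union_map_iso J E V fv fd \<longleftrightarrow>
     graph_iso (disj_union J E) (image_union J E V fv fd)
       (\<lambda>(j, x). fv j x) (\<lambda>(j, d). fd j d)"

text \<open>Local data at a vertex v of a 2-covered graph of spaces: the vertex space V,
the incident oriented edges indexed by I with edge spaces E i and immersions
(fv i, fd i) : E i \<rightarrow> V, such that every edge of V is the image of exactly two
edges of the disjoint union of the E i (counted via oriented edges).\<close>

definition two_covered_vertex ::
  "'i set \<Rightarrow> ('i \<Rightarrow> ('v, 'd) sgraph) \<Rightarrow> ('w, 'e) sgraph \<Rightarrow>
   ('i \<Rightarrow> 'v \<Rightarrow> 'w) \<Rightarrow> ('i \<Rightarrow> 'd \<Rightarrow> 'e) \<Rightarrow> bool" where
  "two_covered_vertex I E V fv fd \<longleftrightarrow>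
     finite I \<and> finite_graph V \<and> connected_graph V \<and>
     (\<forall>i\<in>I. finite_graph (E i) \<and> connected_graph (E i) \<and> immersion (E i) V (fv i) (fd i)) \<and>
     (\<forall>d\<in>gdarts V. card {(i, d'). i \<in> I \<and> d' \<in> gdarts (E i) \<and> fd i d' = d} = 2)"

definition unfoldable ::
  "'i set \<Rightarrow> ('i \<Rightarrow> ('v, 'd) sgraph) \<Rightarrow> ('w, 'e) sgraph \<Rightarrow>
   ('i \<Rightarrow> 'v \<Rightarrow> 'w) \<Rightarrow> ('i \<Rightarrow> 'd \<Rightarrow> 'e) \<Rightarrow> bool" where
  "unfoldable I E V fv fd \<longleftrightarrow>
     (\<forall>J\<subseteq>I. union_map_iso J E V fv fd \<or> union_map_iso (I - J) E V fv fd)"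

definition reducible ::
  "'i set \<Rightarrow> ('i \<Rightarrow> ('v, 'd) sgraph) \<Rightarrow> ('w, 'e) sgraph \<Rightarrow>
   ('i \<Rightarrow> 'v \<Rightarrow> 'w) \<Rightarrow> ('i \<Rightarrow> 'd \<Rightarrow> 'e) \<Rightarrow> bool" where
  "reducible I E V fv fd \<longleftrightarrow>
     card I = 2 \<and> (\<forall>i\<in>I. graph_iso (E i) V (fv i) (fd i))"

end

theory Submission
  imports Defs
begin
lemma good_emb:
  assumes "union_map_iso J E V fv fd" "i \<in> J" "immersion (E i) V (fv i) (fd i)"
  shows "embedding (E i) V (fv i) (fd i)"
proof -
  have iv: "inj_on (\<lambda>(j, x). fv j x) (SIGMA j:J. gverts (E j))"
   and id: "inj_on (\<lambda>(j, d). fd j d) (SIGMA j:J. gdarts (E j))"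
    using assms(1) unfolding union_map_iso_def graph_iso_def embedding_def disj_union_def by auto
  have "inj_on (fv i) (gverts (E i))"
    using iv assms(2) unfolding inj_on_def by fastforce
  moreover have "inj_on (fd i) (gdarts (E i))"
    using id assms(2) unfolding inj_on_def by fastforce
  ultimately show ?thesis using assms(3) unfolding embedding_def immersion_def by auto
qed

lemma good_disj_v:
  assumes "union_map_iso J E V fv fd" "i \<in> J" "j \<in> J" "i \<noteq> j"
  shows "fv i ` gverts (E i) \<inter> fv j ` gverts (E j) = {}"
proof -
  have iv: "inj_on (\<lambda>(j, x). fv j x) (SIGMA j:J. gverts (E j))"
    using assms(1) unfolding union_map_iso_def graph_iso_def embedding_def disj_union_def by auto
  show ?thesis
  proof (rule ccontr)
    assume "fv i ` gverts (E i) \<inter> fv j ` gverts (E j) \<noteq> {}"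
    then obtain x y where "x \<in> gverts (E i)" "y \<in> gverts (E j)" "fv i x = fv j y" by blast
    with iv assms(2,3) have "(i, x) = (j, y)" unfolding inj_on_def by fastforce
    with assms(4) show False by simp
  qed
qed

lemma good_disj_d:
  assumes "union_map_iso J E V fv fd" "i \<in> J" "j \<in> J" "i \<noteq> j"
  shows "fd i ` gdarts (E i) \<inter> fd j ` gdarts (E j) = {}"
proof -
  have iv: "inj_on (\<lambda>(j, x). fd j x) (SIGMA j:J. gdarts (E j))"
    using assms(1) unfolding union_map_iso_def graph_iso_def embedding_def disj_union_def by auto
  show ?thesis
  proof (rule ccontr)
    assume "fd i ` gdarts (E i) \<inter> fd j ` gdarts (E j) \<noteq> {}"
    then obtain x y where "x \<in> gdarts (E i)" "y \<in> gdarts (E j)" "fd i x = fd j y" by blast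
    with iv assms(2,3) have "(i, x) = (j, y)" unfolding inj_on_def by fastforce
    with assms(4) show False by simp
  qed
qed

lemma cover2:
  assumes cov: "two_covered_vertex I E V fv fd"
    and emb: "\<forall>i\<in>I. embedding (E i) V (fv i) (fd i)"
    and d: "d \<in> gdarts V"
  shows "\<exists>p q d1 d2. p \<in> I \<and> q \<in> I \<and> p \<noteq> q \<and> d1 \<in> gdarts (E p) \<and> fd p d1 = d
           \<and> d2 \<in> gdarts (E q) \<and> fd q d2 = d"
proof -
  have "card {(i, d'). i \<in> I \<and> d' \<in> gdarts (E i) \<and> fd i d' = d} = 2"
    using cov d unfolding two_covered_vertex_def by blast
  then obtain x y where xy: "{(i, d'). i \<in> I \<and> d' \<in> gdarts (E i) \<and> fd i d' = d} = {x, y}" "x \<noteq> y"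
    by (auto simp: card_2_iff)
  obtain p d1 where x: "x = (p, d1)" by (cases x)
  obtain q d2 where y: "y = (q, d2)" by (cases y)
  have h1: "p \<in> I" "d1 \<in> gdarts (E p)" "fd p d1 = d" using xy x by blast+
  have h2: "q \<in> I" "d2 \<in> gdarts (E q)" "fd q d2 = d" using xy y by blast+
  have "p \<noteq> q"
  proof
    assume "p = q"
    with h1 h2 emb have "d1 = d2" unfolding embedding_def inj_on_def by metis
    with \<open>p = q\<close> x y xy(2) show False by simp
  qed
  with h1 h2 show ?thesis by blast
qed

lemma cover_term:
  assumes "immersion G V f g" "d1 \<in> gdarts G"
  shows "gterm V (g d1) = f (gterm G d1)"
  using assms unfolding immersion_def graph_morph_def by auto

lemma tern:
  assumes "wf_graph V" "connected_graph V" "d0 \<in> gdarts V" "x \<in> gverts V"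
  shows "\<exists>d\<in>gdarts V. gterm V d = x"
proof -
  have "gterm V d0 \<in> gverts V" using assms unfolding wf_graph_def by blast
  then have "(gterm V d0, x) \<in> {(ginit V d, gterm V d) | d. d \<in> gdarts V}\<^sup>*"
    using assms unfolding connected_graph_def by blast
  then show ?thesis
  proof (cases rule: rtranclE)
    case base then show ?thesis using assms(3) by blast
  next
    case (step y) then show ?thesis by blast
  qed
qed

lemma nodarts:
  assumes "connected_graph V" "gdarts V = {}" "x \<in> gverts V" "y \<in> gverts V"
  shows "x = y"
proof -
  have "(x, y) \<in> {(ginit V d, gterm V d) | d. d \<in> gdarts V}\<^sup>*"
    using assms unfolding connected_graph_def by blast
  then show ?thesis using assms(2) by (cases rule: rtranclE) auto
qed

theorem lemma3p1:
  fixes I :: "'i set"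
    and E :: "'i \<Rightarrow> ('v, 'd) sgraph"
    and V :: "('w, 'e) sgraph"
    and fv :: "'i \<Rightarrow> 'v \<Rightarrow> 'w"
    and fd :: "'i \<Rightarrow> 'd \<Rightarrow> 'e"
  assumes cov: "two_covered_vertex I E V fv fd"
    and nonempty: "card I \<ge> 1"
    and unf: "unfoldable I E V fv fd"
    and nred: "\<not> reducible I E V fv fd"
    and one: "card I = 1 \<longrightarrow> gdarts V \<noteq> {}"
  shows
    "(let degenerate =
          (\<exists>i0\<in>I. \<not> embedding (E i0) V (fv i0) (fd i0) \<and>
             (\<forall>i\<in>I - {i0}. embedding (E i) V (fv i) (fd i)) \<and>
             (\<forall>i\<in>I - {i0}. \<forall>j\<in>I - {i0}. i \<noteq> j \<longrightarrow>
                 fv i ` gverts (E i) \<inter> fv j ` gverts (E j) = {} \<and>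
                 fd i ` gdarts (E i) \<inter> fd j ` gdarts (E j) = {}));
          nondegenerate =
          (card I = 3 \<and>
             (\<forall>i\<in>I. embedding (E i) V (fv i) (fd i)) \<and>
             (\<forall>i\<in>I. \<forall>j\<in>I. fv i ` gverts (E i) \<inter> fv j ` gverts (E j) \<noteq> {}) \<and>
             (\<exists>x\<in>gverts V. \<forall>i\<in>I. x \<in> fv i ` gverts (E i)))
     in (degenerate \<and> \<not> nondegenerate) \<or> (nondegenerate \<and> \<not> degenerate))"
proof -
  have finI: "finite I" and wfV: "wf_graph V" and conV: "connected_graph V"
    and imm: "\<And>i. i \<in> I \<Longrightarrow> immersion (E i) V (fv i) (fd i)"
    and wfE: "\<And>i. i \<in> I \<Longrightarrow> wf_graph (E i)"
    and conE: "\<And>i. i \<in> I \<Longrightarrow> connected_graph (E i)"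
    using cov unfolding two_covered_vertex_def finite_graph_def by auto
  have neE: "\<And>i. i \<in> I \<Longrightarrow> \<exists>x. x \<in> fv i ` gverts (E i)"
    using conE unfolding connected_graph_def by blast
  have imgV: "\<And>i x. i \<in> I \<Longrightarrow> x \<in> fv i ` gverts (E i) \<Longrightarrow> x \<in> gverts V"
    using imm unfolding immersion_def graph_morph_def by blast
  have unf': "\<And>J. J \<subseteq> I \<Longrightarrow> union_map_iso J E V fv fd \<or> union_map_iso (I - J) E V fv fd"
    using unf unfolding unfoldable_def by blast
  show ?thesis
  proof (cases "\<forall>i\<in>I. embedding (E i) V (fv i) (fd i)")
    case False
    then obtain i0 where i0: "i0 \<in> I" "\<not> embedding (E i0) V (fv i0) (fd i0)" by blast
    have "\<not> union_map_iso {i0} E V fv fd" using good_emb[of "{i0}" E V fv fd i0] i0 imm by blast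
    then have g: "union_map_iso (I - {i0}) E V fv fd" using unf'[of "{i0}"] i0 by blast
    have D: "\<exists>i0\<in>I. \<not> embedding (E i0) V (fv i0) (fd i0) \<and>
             (\<forall>i\<in>I - {i0}. embedding (E i) V (fv i) (fd i)) \<and>
             (\<forall>i\<in>I - {i0}. \<forall>j\<in>I - {i0}. i \<noteq> j \<longrightarrow>
                 fv i ` gverts (E i) \<inter> fv j ` gverts (E j) = {} \<and>
                 fd i ` gdarts (E i) \<inter> fd j ` gdarts (E j) = {})"
      using i0 g good_emb[OF g] good_disj_v[OF g] good_disj_d[OF g] imm by blast
    have NN: "\<not> (card I = 3 \<and>
             (\<forall>i\<in>I. embedding (E i) V (fv i) (fd i)) \<and>
             (\<forall>i\<in>I. \<forall>j\<in>I. fv i ` gverts (E i) \<inter> fv j ` gverts (E j) \<noteq> {}) \<and>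
             (\<exists>x\<in>gverts V. \<forall>i\<in>I. x \<in> fv i ` gverts (E i)))" using i0 by blast
    show ?thesis unfolding Let_def by (rule disjI1, rule conjI[OF D NN])
  next
    case True
    note emb = True
    have nd: "\<not> (\<exists>i0\<in>I. \<not> embedding (E i0) V (fv i0) (fd i0))" using emb by blast
    have cov2: "\<And>d. d \<in> gdarts V \<Longrightarrow> \<exists>p q d1 d2. p \<in> I \<and> q \<in> I \<and> p \<noteq> q \<and> d1 \<in> gdarts (E p) \<and> fd p d1 = d
           \<and> d2 \<in> gdarts (E q) \<and> fd q d2 = d"
      using cover2[OF cov emb] by blast
    have covt: "\<And>d. d \<in> gdarts V \<Longrightarrow> \<exists>p q. p \<in> I \<and> q \<in> I \<and> p \<noteq> q \<and>
        gterm V d \<in> fv p ` gverts (E p) \<and> gterm V d \<in> fv q ` gverts (E q)"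
    proof -
      fix d assume "d \<in> gdarts V"
      then obtain p q d1 d2 where pq: "p \<in> I" "q \<in> I" "p \<noteq> q" "d1 \<in> gdarts (E p)" "fd p d1 = d"
           "d2 \<in> gdarts (E q)" "fd q d2 = d" using cov2 by blast
      have "gterm V d = fv p (gterm (E p) d1)" using cover_term[OF imm[OF pq(1)] pq(4)] pq(5) by simp
      moreover have "gterm (E p) d1 \<in> gverts (E p)" using wfE[OF pq(1)] pq(4) unfolding wf_graph_def by blast
      moreover have "gterm V d = fv q (gterm (E q) d2)" using cover_term[OF imm[OF pq(2)] pq(6)] pq(7) by simp
      moreover have "gterm (E q) d2 \<in> gverts (E q)" using wfE[OF pq(2)] pq(6) unfolding wf_graph_def by blast
      ultimately show "\<exists>p q. p \<in> I \<and> q \<in> I \<and> p \<noteq> q \<and>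
        gterm V d \<in> fv p ` gverts (E p) \<and> gterm V d \<in> fv q ` gverts (E q)" using pq by blast
    qed
    show ?thesis
    proof (cases "\<exists>w\<in>gverts V. \<exists>a\<in>I. \<exists>b\<in>I. \<exists>c\<in>I. a \<noteq> b \<and> a \<noteq> c \<and> b \<noteq> c \<and>
        w \<in> fv a ` gverts (E a) \<and> w \<in> fv b ` gverts (E b) \<and> w \<in> fv c ` gverts (E c)")
      case True
      then obtain w a b c where w: "w \<in> gverts V" "a \<in> I" "b \<in> I" "c \<in> I" "a \<noteq> b" "a \<noteq> c" "b \<noteq> c"
        "w \<in> fv a ` gverts (E a)" "w \<in> fv b ` gverts (E b)" "w \<in> fv c ` gverts (E c)" by blast
      have gg: "union_map_iso (I - {x, y}) E V fv fd"
        if "x \<in> I" "y \<in> I" "x \<noteq> y" "w \<in> fv x ` gverts (E x)" "w \<in> fv y ` gverts (E y)" for x y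
      proof -
        have "\<not> union_map_iso {x, y} E V fv fd" using good_disj_v[of "{x,y}" E V fv fd x y] that by blast
        then show ?thesis using unf'[of "{x,y}"] that by blast
      qed
      have g1: "union_map_iso (I - {a, b}) E V fv fd" using gg w by blast
      have g2: "union_map_iso (I - {b, c}) E V fv fd" using gg w by blast
      have g3: "union_map_iso (I - {a, c}) E V fv fd" using gg w by blast
      have Iabc: "I = {a, b, c}"
      proof (rule ccontr)
        assume "I \<noteq> {a, b, c}"
        then obtain k where k: "k \<in> I" "k \<notin> {a, b, c}" using w by blast
        have dk: "fv k ` gverts (E k) \<inter> fv a ` gverts (E a) = {}"
                 "fv k ` gverts (E k) \<inter> fv b ` gverts (E b) = {}"
                 "fv k ` gverts (E k) \<inter> fv c ` gverts (E c) = {}"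
          using good_disj_v[OF g2, of k a] good_disj_v[OF g3, of k b] good_disj_v[OF g1, of k c] k w by auto
        obtain x where x: "x \<in> fv k ` gverts (E k)" using neE k by blast
        have xV: "x \<in> gverts V" using imgV k x by blast
        obtain m where m: "m \<in> I" "m \<noteq> k" "x \<in> fv m ` gverts (E m)"
        proof (cases "gdarts V = {}")
          case True
          then have "x = w" using nodarts[OF conV True xV w(1)] by simp
          then show ?thesis using that w k by blast
        next
          case False
          then obtain d0 where "d0 \<in> gdarts V" by blast
          then obtain d where d: "d \<in> gdarts V" "gterm V d = x" using tern[OF wfV conV _ xV] by blast
          then show ?thesis using covt[OF d(1)] that by metis
        qed
        have "m \<notin> {a, b, c}" using dk m x by blast
        then show False using good_disj_v[OF g1, of k m] k m x by blast
      qed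
      have c3: "card I = 3" using Iabc w by simp
      have ND: "card I = 3 \<and>
             (\<forall>i\<in>I. embedding (E i) V (fv i) (fd i)) \<and>
             (\<forall>i\<in>I. \<forall>j\<in>I. fv i ` gverts (E i) \<inter> fv j ` gverts (E j) \<noteq> {}) \<and>
             (\<exists>x\<in>gverts V. \<forall>i\<in>I. x \<in> fv i ` gverts (E i))"
      proof (intro conjI c3 emb ballI)
        fix i j assume "i \<in> I" "j \<in> I"
        then show "fv i ` gverts (E i) \<inter> fv j ` gverts (E j) \<noteq> {}" using Iabc w(8-10) by auto
      next
        show "\<exists>x\<in>gverts V. \<forall>i\<in>I. x \<in> fv i ` gverts (E i)" using Iabc w(1,8-10) by auto
      qed
      have ND2: "\<not> (\<exists>i0\<in>I. \<not> embedding (E i0) V (fv i0) (fd i0) \<and>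
             (\<forall>i\<in>I - {i0}. embedding (E i) V (fv i) (fd i)) \<and>
             (\<forall>i\<in>I - {i0}. \<forall>j\<in>I - {i0}. i \<noteq> j \<longrightarrow>
                 fv i ` gverts (E i) \<inter> fv j ` gverts (E j) = {} \<and>
                 fd i ` gdarts (E i) \<inter> fd j ` gdarts (E j) = {}))" using emb by blast
      show ?thesis unfolding Let_def by (rule disjI2, rule conjI[OF ND ND2])
    next
      case False
      note le2 = False
      obtain a b u where ab: "a \<in> I" "b \<in> I" "a \<noteq> b" "u \<in> gverts V"
          "u \<in> fv a ` gverts (E a)" "u \<in> fv b ` gverts (E b)"
      proof (cases "gdarts V = {}")
        case False
        then obtain d0 where d0: "d0 \<in> gdarts V" by blast
        have "gterm V d0 \<in> gverts V" using wfV d0 unfolding wf_graph_def by blast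
        then show ?thesis using covt[OF d0] that by blast
      next
        case True
        then have "card I \<noteq> 1" using one by blast
        then have "card I \<ge> 2" using nonempty by simp
        then obtain a b where ab: "a \<in> I" "b \<in> I" "a \<noteq> b"
          by (metis One_nat_def Suc_1 card_le_Suc0_iff_eq finI not_less_eq_eq)
        obtain u where u: "u \<in> fv a ` gverts (E a)" using neE ab by blast
        obtain y where y: "y \<in> fv b ` gverts (E b)" using neE ab by blast
        have "u = y" using nodarts[OF conV True] imgV u y ab by blast
        then show ?thesis using that ab u y imgV by blast
      qed
      define U where "U = {x \<in> gverts V. x \<in> fv a ` gverts (E a) \<and> x \<in> fv b ` gverts (E b)}"
      have covU: "\<exists>d1\<in>gdarts (E a). fd a d1 = d" "\<exists>d2\<in>gdarts (E b). fd b d2 = d"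
        if hU: "d \<in> gdarts V" "gterm V d \<in> U" for d
      proof -
        obtain p q d1 d2 where pq: "p \<in> I" "q \<in> I" "p \<noteq> q" "d1 \<in> gdarts (E p)" "fd p d1 = d"
           "d2 \<in> gdarts (E q)" "fd q d2 = d" using cov2 hU(1) by blast
        have tp: "gterm V d \<in> fv p ` gverts (E p)"
          using cover_term[OF imm[OF pq(1)] pq(4)] pq(5) wfE[OF pq(1)] pq(4) unfolding wf_graph_def by auto
        have tq: "gterm V d \<in> fv q ` gverts (E q)"
          using cover_term[OF imm[OF pq(2)] pq(6)] pq(7) wfE[OF pq(2)] pq(6) unfolding wf_graph_def by auto
        have "p \<in> {a, b}" using le2 tp hU(2) ab pq(1) unfolding U_def by blast
        moreover have "q \<in> {a, b}" using le2 tq hU(2) ab pq(2) unfolding U_def by blast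
        ultimately have "(p = a \<and> q = b) \<or> (p = b \<and> q = a)" using pq(3) by blast
        then show "\<exists>d1\<in>gdarts (E a). fd a d1 = d" "\<exists>d2\<in>gdarts (E b). fd b d2 = d"
          using pq by blast+
      qed
      have stepU: "gterm V d \<in> fv i ` gverts (E i)"
        if hU: "d \<in> gdarts V" "ginit V d \<in> U" "i \<in> {a, b}" for d i
      proof -
        have rd: "grev V d \<in> gdarts V" "grev V (grev V d) = d" using wfV hU(1) unfolding wf_graph_def by auto
        have "gterm V (grev V d) \<in> U" using hU(2) unfolding ginit_def .
        then obtain d1 where d1: "d1 \<in> gdarts (E i)" "fd i d1 = grev V d"
          using covU[OF rd(1)] hU(3) by blast
        have iI: "i \<in> I" using hU(3) ab by blast
        have r1: "grev (E i) d1 \<in> gdarts (E i)" using wfE[OF iI] d1(1) unfolding wf_graph_def by blast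
        have "fd i (grev (E i) d1) = d"
          using imm[OF iI] d1 rd(2) unfolding immersion_def graph_morph_def by auto
        then have "gterm V d = fv i (gterm (E i) (grev (E i) d1))"
          using cover_term[OF imm[OF iI] r1] by simp
        moreover have "gterm (E i) (grev (E i) d1) \<in> gverts (E i)"
          using wfE[OF iI] r1 unfolding wf_graph_def by blast
        ultimately show ?thesis by blast
      qed
      have allU: "x \<in> U" if "x \<in> gverts V" for x
      proof -
        have "(u, x) \<in> {(ginit V d, gterm V d) | d. d \<in> gdarts V}\<^sup>*"
          using conV ab(4) that unfolding connected_graph_def by blast
        then show ?thesis
        proof (induction rule: rtrancl_induct)
          case base then show ?case using ab unfolding U_def by blast
        next
          case (step y z)
          then obtain d where d: "d \<in> gdarts V" "y = ginit V d" "z = gterm V d" by blast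
          have "z \<in> gverts V" using wfV d unfolding wf_graph_def by blast
          have yU: "ginit V d \<in> U" using step(3) d(2) by simp
          have "z \<in> fv a ` gverts (E a)" "z \<in> fv b ` gverts (E b)"
            using stepU[OF d(1) yU, of a] stepU[OF d(1) yU, of b] d(3) by auto
          with \<open>z \<in> gverts V\<close> show ?case unfolding U_def by blast
        qed
      qed
      have Iab: "I = {a, b}"
      proof (rule ccontr)
        assume "I \<noteq> {a, b}"
        then obtain k where k: "k \<in> I" "k \<notin> {a, b}" using ab by blast
        obtain x where x: "x \<in> fv k ` gverts (E k)" using neE k by blast
        have "x \<in> U" using allU imgV k x by blast
        then show False using le2 k x ab unfolding U_def by blast
      qed
      have iso: "graph_iso (E i) V (fv i) (fd i)" if "i \<in> {a, b}" for i
      proof -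
        have iI: "i \<in> I" using that ab by blast
        have "fv i ` gverts (E i) = gverts V"
          using imgV[OF iI] allU that unfolding U_def by blast
        moreover have "fd i ` gdarts (E i) = gdarts V"
        proof
          show "fd i ` gdarts (E i) \<subseteq> gdarts V"
            using imm[OF iI] unfolding immersion_def graph_morph_def by blast
          show "gdarts V \<subseteq> fd i ` gdarts (E i)"
          proof
            fix d assume d: "d \<in> gdarts V"
            have "gterm V d \<in> U" using allU wfV d unfolding wf_graph_def by blast
            then show "d \<in> fd i ` gdarts (E i)" using covU[OF d] that by (metis empty_iff image_eqI insert_iff)
          qed
        qed
        ultimately show ?thesis using emb iI unfolding graph_iso_def by blast
      qed
      have "reducible I E V fv fd" unfolding reducible_def using Iab ab(3) iso by simp
      with nred show ?thesis by blast
    qed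
  qed
qed

end
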